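(* Let $R$ be a commutative ring, $M$ an $R$-module, $\underline{x}=x_1,\ldots,x_r$ an $M$-weakly pro-regular sequence and $\mathfrak{a}=\underline{x}R$. Then for every injective $R$-module $I$ the natural map $\Gamma_{\mathfrak{a}}(\operatorname{Hom}_R(M,I))\to\check{C}_{\underline{x}}\otimes_R\operatorname{Hom}_R(M,I)$ is a quasi-isomorphism.
   Context: $\Gamma_{\mathfrak{a}}(N)=\{n\in N:\mathfrak{a}^kn=0\text{ for some }k\}$, regarded as a complex in degree $0$. $\check{C}_{\underline{x}}=\bigotimes_j(0\to R\to R_{x_j}\to0)$ is the Čech complex (degrees $0,\ldots,r$). $\underline{x}$ is $M$-weakly pro-regular if for all $i>0$ the inverse system $\{H_i(\underline{x}^{(n)};M)\}_{n\ge1}$ of Koszul homology modules of $\underline{x}^{(n)}=x_1^n,\ldots,x_r^n$ (with the natural transition maps) is pro-zero, i.e. for every $n$ there is $m\ge n$ such that $H_i(\underline{x}^{(m)};M)\to H_i(\underline{x}^{(n)};M)$ is zero. *)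

theory Defs
  imports Main "HOL.Modules" "HOL-Library.Function_Algebras"
begin

text \<open>A general module N is given by a carrier set N inside
  an abelian group 'n with a scalar multiplication s (used for Hom_R(M,I), which
  lives inside the function space).  The sequence x_1..x_r is a list xs, indices 0..r-1.\<close>

definition xprod :: "'r::comm_ring_1 list \<Rightarrow> nat set \<Rightarrow> 'r" where
  "xprod xs J = (\<Prod>j\<in>J. xs ! j)"

definition idx_sets :: "nat \<Rightarrow> nat \<Rightarrow> nat set set" where
  "idx_sets r p = {J. J \<subseteq> {0..<r} \<and> card J = p}"

definition pos :: "nat \<Rightarrow> nat set \<Rightarrow> nat" where
  "pos j J = card {l\<in>J. l < j}"

definition ideal_of :: "'r::comm_ring_1 list \<Rightarrow> 'r set" where
  "ideal_of xs = module.span ((*) :: 'r \<Rightarrow> 'r \<Rightarrow> 'r) (set xs)"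

definition ideal_power :: "'r::comm_ring_1 set \<Rightarrow> nat \<Rightarrow> 'r set" where
  "ideal_power A k = module.span ((*) :: 'r \<Rightarrow> 'r \<Rightarrow> 'r)
      (prod_list ` {ys. length ys = k \<and> set ys \<subseteq> A})"

definition Gamma ::
  "('r::comm_ring_1 \<Rightarrow> 'n::ab_group_add \<Rightarrow> 'n) \<Rightarrow> 'n set \<Rightarrow> 'r set \<Rightarrow> 'n set" where
  "Gamma s N A = {n\<in>N. \<exists>k. \<forall>y\<in>ideal_power A k. s y n = 0}"

text \<open>K_i(y;M) = direct sum over J in idx_sets r i of copies of M; a chain is a function
  c :: nat set => 'm, only its values on idx_sets r i matter.\<close>

definition koszul_d ::
  "('r::comm_ring_1 \<Rightarrow> 'm::ab_group_add \<Rightarrow> 'm) \<Rightarrow> 'r list \<Rightarrow> (nat set \<Rightarrow> 'm) \<Rightarrow> nat set \<Rightarrow> 'm" where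
  "koszul_d s ys c J =
     (\<Sum>j\<in>{0..<length ys} - J. s ((-1) ^ pos j J * (ys ! j)) (c (insert j J)))"

definition koszul_cycle ::
  "('r::comm_ring_1 \<Rightarrow> 'm::ab_group_add \<Rightarrow> 'm) \<Rightarrow> 'r list \<Rightarrow> nat \<Rightarrow> (nat set \<Rightarrow> 'm) \<Rightarrow> bool" where
  "koszul_cycle s ys i c \<longleftrightarrow> (\<forall>J\<in>idx_sets (length ys) (i - 1). koszul_d s ys c J = 0)"

definition koszul_boundary ::
  "('r::comm_ring_1 \<Rightarrow> 'm::ab_group_add \<Rightarrow> 'm) \<Rightarrow> 'r list \<Rightarrow> nat \<Rightarrow> (nat set \<Rightarrow> 'm) \<Rightarrow> bool" where
  "koszul_boundary s ys i c \<longleftrightarrow>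
     (\<exists>b. \<forall>J\<in>idx_sets (length ys) i. koszul_d s ys b J = c J)"

definition powers :: "'r::comm_ring_1 list \<Rightarrow> nat \<Rightarrow> 'r list" where
  "powers xs n = map (\<lambda>x. x ^ n) xs"

text \<open>Natural transition map K(x^(m);M) -> K(x^(n);M), m >= n: e_J |-> x_J^(m-n) e_J.\<close>
definition koszul_trans ::
  "('r::comm_ring_1 \<Rightarrow> 'm::ab_group_add \<Rightarrow> 'm) \<Rightarrow> 'r list \<Rightarrow> nat \<Rightarrow> nat \<Rightarrow> (nat set \<Rightarrow> 'm) \<Rightarrow> nat set \<Rightarrow> 'm" where
  "koszul_trans s xs m n c J = s (xprod xs J ^ (m - n)) (c J)"

text \<open>Pro-zero of {H_i(x^(n);M)}_n for all i > 0.\<close>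
definition weakly_pro_regular ::
  "('r::comm_ring_1 \<Rightarrow> 'm::ab_group_add \<Rightarrow> 'm) \<Rightarrow> 'r list \<Rightarrow> bool" where
  "weakly_pro_regular s xs \<longleftrightarrow>
     (\<forall>i>0. \<forall>n\<ge>1. \<exists>m\<ge>n. \<forall>c. koszul_cycle s (powers xs m) i c \<longrightarrow>
        koszul_boundary s (powers xs n) i (koszul_trans s xs m n c))"

text \<open>(C_x tensor N)^p = direct sum over J in idx_sets r p of the localizations N_{x_J}.
  A p-cochain is written with a common exponent k as (c_J / x_J^k)_J with c_J in N.
  Differential: (d c)_J' = sum over j in J' of (-1)^pos(j,J') x_j^k c_{J'-j} / x_J'^k;
  cech_num gives the numerator.\<close>

definition cech_num ::
  "('r::comm_ring_1 \<Rightarrow> 'n::ab_group_add \<Rightarrow> 'n) \<Rightarrow> 'r list \<Rightarrow> nat \<Rightarrow> (nat set \<Rightarrow> 'n) \<Rightarrow> nat set \<Rightarrow> 'n" where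
  "cech_num s xs k c J' = (\<Sum>j\<in>J'. s ((-1) ^ pos j J' * (xs ! j) ^ k) (c (J' - {j})))"

definition cech_cocycle ::
  "('r::comm_ring_1 \<Rightarrow> 'n::ab_group_add \<Rightarrow> 'n) \<Rightarrow> 'n set \<Rightarrow> 'r list \<Rightarrow> nat \<Rightarrow> nat \<Rightarrow> (nat set \<Rightarrow> 'n) \<Rightarrow> bool" where
  "cech_cocycle s N xs p k c \<longleftrightarrow>
     (\<forall>J\<in>idx_sets (length xs) p. c J \<in> N) \<and>
     (\<forall>J\<in>idx_sets (length xs) (Suc p). \<exists>l. s (xprod xs J ^ l) (cech_num s xs k c J) = 0)"

text \<open>(c_J / x_J^k) is the image of the (p-1)-cochain (b_J / x_J^k'), equality taken
  in the localizations N_{x_J}.\<close>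
definition cech_coboundary ::
  "('r::comm_ring_1 \<Rightarrow> 'n::ab_group_add \<Rightarrow> 'n) \<Rightarrow> 'n set \<Rightarrow> 'r list \<Rightarrow> nat \<Rightarrow> nat \<Rightarrow> (nat set \<Rightarrow> 'n) \<Rightarrow> bool" where
  "cech_coboundary s N xs p k c \<longleftrightarrow>
     (\<exists>k' b. (\<forall>J\<in>idx_sets (length xs) (p - 1). b J \<in> N) \<and>
        (\<forall>J\<in>idx_sets (length xs) p. \<exists>l. s (xprod xs J ^ l)
            (s (xprod xs J ^ k) (cech_num s xs k' b J) - s (xprod xs J ^ k') (c J)) = 0))"

text \<open>The natural map Gamma_a(N) -> C_x tensor N (inclusion into degree 0, N_{x_emptyset} = N)
  is a quasi-isomorphism: it lands in, and is onto, H^0 = Z^0, and H^p = 0 for p >= 1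
  (Gamma_a(N) being concentrated in degree 0).\<close>
definition natural_map_quasi_iso ::
  "('r::comm_ring_1 \<Rightarrow> 'n::ab_group_add \<Rightarrow> 'n) \<Rightarrow> 'n set \<Rightarrow> 'r list \<Rightarrow> bool" where
  "natural_map_quasi_iso s N xs \<longleftrightarrow>
     Gamma s N (ideal_of xs) = {n\<in>N. cech_cocycle s N xs 0 0 (\<lambda>_. n)} \<and>
     (\<forall>p\<ge>1. \<forall>k c. cech_cocycle s N xs p k c \<longrightarrow> cech_coboundary s N xs p k c)"

definition injective_module ::
  "('r::comm_ring_1 \<Rightarrow> 'i::ab_group_add \<Rightarrow> 'i) \<Rightarrow> bool" where
  "injective_module sI \<longleftrightarrow>
     (\<forall>J f. module.subspace ((*) :: 'r \<Rightarrow> 'r \<Rightarrow> 'r) J \<and>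
        (\<forall>a\<in>J. \<forall>b\<in>J. f (a + b) = f a + f b) \<and> (\<forall>c. \<forall>a\<in>J. f (c * a) = sI c (f a))
        \<longrightarrow> (\<exists>g. module_hom ((*) :: 'r \<Rightarrow> 'r \<Rightarrow> 'r) sI g \<and> (\<forall>a\<in>J. g a = f a)))"

definition Hom_carrier ::
  "('r::comm_ring_1 \<Rightarrow> 'm::ab_group_add \<Rightarrow> 'm) \<Rightarrow> ('r \<Rightarrow> 'i::ab_group_add \<Rightarrow> 'i) \<Rightarrow> ('m \<Rightarrow> 'i) set" where
  "Hom_carrier sM sI = {f. module_hom sM sI f}"

definition Hom_scale ::
  "('r::comm_ring_1 \<Rightarrow> 'i::ab_group_add \<Rightarrow> 'i) \<Rightarrow> 'r \<Rightarrow> ('m \<Rightarrow> 'i) \<Rightarrow> ('m \<Rightarrow> 'i)" where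
  "Hom_scale sI r f = (\<lambda>m. sI r (f m))"

end

theory Submission
  imports Defs
begin


lemma sum_fun_apply: "(sum f A) x = (\<Sum>a\<in>A. f a x)"
  for f :: "'a \<Rightarrow> 'b \<Rightarrow> 'c::comm_monoid_add"
  by (induct A rule: infinite_finite_induct) auto

lemma module_times: "module ((*) :: 'a::comm_ring_1 \<Rightarrow> 'a \<Rightarrow> 'a)"
  by unfold_locales (auto simp: algebra_simps)

lemma ann_span:
  assumes m: "module s" and S: "\<forall>y\<in>S. s y n = 0" and y: "y \<in> module.span (*) S"
  shows "s y n = 0"
proof -
  have "module.subspace (*) {y. s y n = 0}"
    unfolding module.subspace_def[OF module_times]
    using m by (auto simp: module.scale_left_distrib module.scale_scale[OF m, symmetric] module.scale_zero_left[OF m] module.scale_zero_right[OF m])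
  then show ?thesis
    using module.span_minimal[OF module_times, of S "{y. s y n = 0}"] S y by auto
qed

lemma prod_kill:
  assumes m: "module s" and g: "\<forall>g\<in>set gs. s (g ^ L) n = 0"
  shows "finite I \<Longrightarrow> card I > length gs * L \<Longrightarrow> (\<forall>i\<in>I. y i \<in> module.span (*) (set gs))
     \<Longrightarrow> s (\<Prod>i\<in>I. y i) n = 0"
  using g
proof (induction gs arbitrary: I y)
  case Nil
  then obtain i where "i \<in> I" by fastforce
  with Nil have "y i = 0" by (simp add: module.span_empty[OF module_times])
  with \<open>i\<in>I\<close> Nil have "(\<Prod>i\<in>I. y i) = 0" by (intro prod_zero) auto
  then show ?case using m by (simp add: module.scale_zero_left)
next
  case (Cons g hs)
  have "\<forall>i\<in>I. \<exists>k. y i - k * g \<in> module.span (*) (set hs)"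
    using Cons.prems(3) module.span_breakdown_eq[OF module_times] by (simp only: list.set) blast
  then obtain c where c: "\<forall>i\<in>I. y i - c i * g \<in> module.span (*) (set hs)" by metis
  define b where "b i = y i - c i * g" for i
  have "(\<Prod>i\<in>I. y i) = (\<Prod>i\<in>I. c i * g + b i)"
    by (rule prod.cong) (auto simp: b_def)
  also have "\<dots> = (\<Sum>X\<in>Pow I. (\<Prod>i\<in>X. c i * g) * (\<Prod>i\<in>I-X. b i))"
    by (rule prod_add) (fact Cons.prems(1))
  finally have eq: "(\<Prod>i\<in>I. y i) = \<dots>" .
  have "s ((\<Prod>i\<in>X. c i * g) * (\<Prod>i\<in>I-X. b i)) n = 0" if X: "X \<in> Pow I" for X
  proof (cases "card X \<ge> L")
    case True
    have "(\<Prod>i\<in>X. c i * g) = (\<Prod>i\<in>X. c i) * g ^ (card X - L) * g ^ L"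
      using True by (simp add: prod.distrib mult.assoc power_add[symmetric])
    then have "s ((\<Prod>i\<in>X. c i * g) * (\<Prod>i\<in>I-X. b i)) n
       = s ((\<Prod>i\<in>X. c i) * g ^ (card X - L) * (\<Prod>i\<in>I-X. b i)) (s (g ^ L) n)"
      using m by (simp add: module.scale_scale ac_simps)
    also have "\<dots> = 0" using Cons.prems(4) m by (simp add: module.scale_zero_right)
    finally show ?thesis .
  next
    case False
    have fX: "finite X" using X Cons.prems(1) finite_subset by auto
    have "card (I - X) = card I - card X" using X Cons.prems(1) by (simp add: card_Diff_subset fX)
    then have "card (I - X) > length hs * L" using False Cons.prems(2) by simp
    moreover have "\<forall>i\<in>I-X. b i \<in> module.span (*) (set hs)" using c b_def by auto
    ultimately have "s (\<Prod>i\<in>I-X. b i) n = 0"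
      using Cons.IH[of "I - X" b] Cons.prems by auto
    then show ?thesis using m
      by (simp add: module.scale_scale[OF m, symmetric] module.scale_zero_right)
  qed
  then show ?case unfolding eq using m by (simp add: module.scale_sum_left)
qed

lemma prod_list_nth: "prod_list xs = (\<Prod>i<length xs. xs ! i)"
  by (induct xs) (simp_all del: prod.lessThan_Suc add: prod.lessThan_Suc_shift)

lemma idx_sets_0: "idx_sets r 0 = {{}}"
  unfolding idx_sets_def using finite_subset by fastforce

lemma idx_sets_1: "idx_sets r (Suc 0) = (\<lambda>j. {j}) ` {0..<r}"
  unfolding idx_sets_def by (auto simp: card_1_singleton_iff)

lemma cocycle0_iff:
  assumes m: "module s" shows "cech_cocycle s N xs 0 0 (\<lambda>_. n) \<longleftrightarrow> n \<in> N \<and> (\<forall>j<length xs. \<exists>l. s ((xs ! j) ^ l) n = 0)"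
proof -
  have "pos j {j} = 0" for j unfolding pos_def by simp
  then show ?thesis
    unfolding cech_cocycle_def idx_sets_0 idx_sets_1 cech_num_def xprod_def using m by (auto simp: module.scale_one[OF m])
qed

lemma gamma_eq:
  assumes m: "module s"
  shows "Gamma s N (ideal_of xs) = {n\<in>N. cech_cocycle s N xs 0 0 (\<lambda>_. n)}"
proof (intro set_eqI iffI)
  fix n assume "n \<in> Gamma s N (ideal_of xs)"
  then obtain k where n: "n \<in> N" and k: "\<forall>y\<in>ideal_power (ideal_of xs) k. s y n = 0"
    unfolding Gamma_def by auto
  have "s ((xs ! j) ^ k) n = 0" if "j < length xs" for j
  proof -
    have "xs ! j \<in> ideal_of xs" unfolding ideal_of_def
      using that by (intro module.span_base[OF module_times]) auto
    then have "prod_list (replicate k (xs ! j)) \<in> ideal_power (ideal_of xs) k"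
      unfolding ideal_power_def by (intro module.span_base[OF module_times] image_eqI[where x="replicate k (xs ! j)"]) auto
    then show ?thesis using k by simp
  qed
  then show "n \<in> {n\<in>N. cech_cocycle s N xs 0 0 (\<lambda>_. n)}"
    using n by (auto simp: cocycle0_iff[OF m])
next
  fix n assume "n \<in> {n\<in>N. cech_cocycle s N xs 0 0 (\<lambda>_. n)}"
  then have n: "n \<in> N" and l: "\<forall>j<length xs. \<exists>l. s ((xs ! j) ^ l) n = 0"
    by (auto simp: cocycle0_iff[OF m])
  then obtain lf where lf: "\<forall>j<length xs. s ((xs ! j) ^ lf j) n = 0" by metis
  define L where "L = (\<Sum>j<length xs. lf j)"
  have L: "\<forall>g\<in>set xs. s (g ^ L) n = 0"
  proof
    fix g assume "g \<in> set xs"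
    then obtain j where j: "j < length xs" "g = xs ! j" by (auto simp: in_set_conv_nth)
    have "lf j \<le> L" unfolding L_def using j by (intro member_le_sum) auto
    then have "g ^ L = g ^ (L - lf j) * g ^ lf j" by (simp add: power_add[symmetric])
    then show "s (g ^ L) n = 0" using lf j m
      by (simp add: module.scale_scale[OF m, symmetric] module.scale_zero_right[OF m])
  qed
  define k where "k = length xs * L + 1"
  have "\<forall>y\<in>ideal_power (ideal_of xs) k. s y n = 0"
  proof
    fix y assume y: "y \<in> ideal_power (ideal_of xs) k"
    show "s y n = 0" unfolding ideal_power_def
    proof (rule ann_span[OF m _ y[unfolded ideal_power_def]], rule ballI)
      fix z assume "z \<in> prod_list ` {ys. length ys = k \<and> set ys \<subseteq> ideal_of xs}"
      then obtain ys where ys: "length ys = k" "set ys \<subseteq> ideal_of xs" and z: "z = prod_list ys"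
        by auto
      have "s (\<Prod>i<length ys. ys ! i) n = 0"
        by (rule prod_kill[OF m L]) (use ys in \<open>auto simp: k_def ideal_of_def\<close>)
      then show "s z n = 0" by (simp add: z prod_list_nth)
    qed
  qed
  then show "n \<in> Gamma s N (ideal_of xs)" using n unfolding Gamma_def by auto
qed



definition good_graph where
  "good_graph s sI V f G \<longleftrightarrow>
    (\<forall>a y y'. (a,y)\<in>G \<longrightarrow> (a,y')\<in>G \<longrightarrow> y = y') \<and>
    (\<forall>a b ya yb. (a,ya)\<in>G \<longrightarrow> (b,yb)\<in>G \<longrightarrow> (a+b, ya+yb)\<in>G) \<and>
    (\<forall>c a y. (a,y)\<in>G \<longrightarrow> (s c a, sI c y)\<in>G) \<and>
    (\<forall>a\<in>V. (a, f a)\<in>G)"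

lemma good_fun: "good_graph s sI V f G \<Longrightarrow> (a,y)\<in>G \<Longrightarrow> (a,y')\<in>G \<Longrightarrow> y = y'"
  unfolding good_graph_def by blast
lemma good_add: "good_graph s sI V f G \<Longrightarrow> (a,y)\<in>G \<Longrightarrow> (b,y')\<in>G \<Longrightarrow> (a+b, y+y') \<in> G"
  unfolding good_graph_def by blast

lemma baer_extend:
  fixes s :: "'r::comm_ring_1 \<Rightarrow> 'a::ab_group_add \<Rightarrow> 'a" and sI :: "'r \<Rightarrow> 'i::ab_group_add \<Rightarrow> 'i"
  assumes ms: "module s" and mI: "module sI" and inj: "injective_module sI"
    and V: "module.subspace s V" and fadd: "\<forall>a\<in>V. \<forall>b\<in>V. f (a+b) = f a + f b"
    and fsc: "\<forall>c. \<forall>a\<in>V. f (s c a) = sI c (f a)"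
  shows "\<exists>g. module_hom s sI g \<and> (\<forall>a\<in>V. g a = f a)"
proof -
  let ?A = "{G. good_graph s sI V f G}"
  have "\<exists>M\<in>?A. \<forall>X\<in>?A. M \<subseteq> X \<longrightarrow> X = M"
  proof (rule subset_Zorn_nonempty)
    have "{(a, f a) | a. a \<in> V} \<in> ?A"
      using V fadd fsc unfolding good_graph_def module.subspace_def[OF ms] by auto
    then show "?A \<noteq> {}" by blast
  next
    fix C assume C: "C \<noteq> {}" "subset.chain ?A C"
    then have CA: "C \<subseteq> ?A" and tot: "\<forall>X\<in>C. \<forall>Y\<in>C. X \<subseteq> Y \<or> Y \<subseteq> X"
      unfolding subset.chain_def by auto
    have "good_graph s sI V f (\<Union>C)"
      unfolding good_graph_def
    proof (intro conjI allI impI ballI)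
      fix a y y' assume "(a,y) \<in> \<Union>C" "(a,y') \<in> \<Union>C"
      then obtain X Y where "X\<in>C" "Y\<in>C" "(a,y)\<in>X" "(a,y')\<in>Y" by auto
      then have "(a,y)\<in>X \<and> (a,y')\<in>X \<or> (a,y)\<in>Y \<and> (a,y')\<in>Y" using tot by blast
      moreover have gX: "good_graph s sI V f X" and gY: "good_graph s sI V f Y" using CA \<open>X\<in>C\<close> \<open>Y\<in>C\<close> by auto
      ultimately show "y = y'" using good_fun[OF gX, of a y y'] good_fun[OF gY, of a y y'] by blast
    next
      fix a b ya yb assume "(a,ya) \<in> \<Union>C" "(b,yb) \<in> \<Union>C"
      then obtain X Y where XY: "X\<in>C" "Y\<in>C" "(a,ya)\<in>X" "(b,yb)\<in>Y" by auto
      then have "(a,ya)\<in>X \<and> (b,yb)\<in>X \<or> (a,ya)\<in>Y \<and> (b,yb)\<in>Y" using tot by blast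
      moreover have gX: "good_graph s sI V f X" and gY: "good_graph s sI V f Y" using CA XY by auto
      ultimately have "(a+b, ya+yb) \<in> X \<or> (a+b, ya+yb) \<in> Y"
        using good_add[OF gX, of a ya b yb] good_add[OF gY, of a ya b yb] by blast
      with XY show "(a+b, ya+yb) \<in> \<Union>C" by auto
    next
      fix c a y assume "(a,y) \<in> \<Union>C"
      then obtain X where "X\<in>C" "(a,y)\<in>X" by auto
      with CA show "(s c a, sI c y) \<in> \<Union>C" unfolding good_graph_def by blast
    next
      fix a assume "a \<in> V"
      obtain X where "X \<in> C" using C by auto
      with CA \<open>a\<in>V\<close> show "(a, f a) \<in> \<Union>C" unfolding good_graph_def by blast
    qed
    then show "\<Union>C \<in> ?A" by simp
  qed
  then obtain G where G: "good_graph s sI V f G" and max: "\<And>X. good_graph s sI V f X \<Longrightarrow> G \<subseteq> X \<Longrightarrow> X = G"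
    by auto
  note Gfun = G[unfolded good_graph_def, THEN conjunct1, rule_format]
  note Gadd = G[unfolded good_graph_def, THEN conjunct2, THEN conjunct1, rule_format]
  note Gsc = G[unfolded good_graph_def, THEN conjunct2, THEN conjunct2, THEN conjunct1, rule_format]
  note GV = G[unfolded good_graph_def, THEN conjunct2, THEN conjunct2, THEN conjunct2, rule_format]
  have G0: "(0, 0) \<in> G"
  proof -
    have "0 \<in> V" using V module.subspace_0[OF ms] by blast
    then have "(s 0 0, sI 0 (f 0)) \<in> G" by (rule Gsc[OF GV])
    then show ?thesis using ms mI by (simp add: module.scale_zero_left)
  qed
  have Gdiff: "(a - b, ya - yb) \<in> G" if "(a,ya)\<in>G" "(b,yb)\<in>G" for a b ya yb
  proof -
    have "(s (-1) b, sI (-1) yb) \<in> G" by (rule Gsc[OF that(2)])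
    moreover have "s (-1) b = -b" using module.scale_minus_left[OF ms, of 1 b] module.scale_one[OF ms, of b] by simp
    moreover have "sI (-1) yb = -yb" using module.scale_minus_left[OF mI, of 1 yb] module.scale_one[OF mI, of yb] by simp
    ultimately have "(-b, -yb) \<in> G" by metis
    from Gadd[OF that(1) this] show ?thesis by simp
  qed
  have total: "\<forall>a. \<exists>y. (a,y) \<in> G"
  proof (rule ccontr)
    assume "\<not> (\<forall>a. \<exists>y. (a,y) \<in> G)"
    then obtain a where a: "\<And>y. (a,y) \<notin> G" by auto
    define J where "J = {r. \<exists>y. (s r a, y) \<in> G}"
    define h where "h r = (THE y. (s r a, y) \<in> G)" for r
    have hG: "(s r a, h r) \<in> G" if rJ: "r \<in> J" for r
    proof -
      obtain y where y: "(s r a, y) \<in> G" using rJ unfolding J_def by blast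
      have "\<exists>!y. (s r a, y) \<in> G" using y by (intro ex1I[of _ y]) (assumption, rule Gfun[OF _ y])
      then show ?thesis unfolding h_def by (rule theI')
    qed
    have hu: "h r = y" if "(s r a, y) \<in> G" for r y
    proof -
      have "r \<in> J" using that unfolding J_def by blast
      then show ?thesis by (rule Gfun[OF hG that])
    qed
    have Jsub: "module.subspace ((*) :: 'r \<Rightarrow> 'r \<Rightarrow> 'r) J"
      unfolding module.subspace_def[OF module_times] J_def
    proof (intro conjI allI ballI)
      have "s 0 a = 0" using ms by (simp add: module.scale_zero_left)
      then show "0 \<in> {r. \<exists>y. (s r a, y) \<in> G}" using G0 by auto
    next
      fix x y assume "x \<in> {r. \<exists>y. (s r a, y) \<in> G}" "y \<in> {r. \<exists>y. (s r a, y) \<in> G}"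
      then obtain yx yy where "(s x a, yx) \<in> G" "(s y a, yy) \<in> G" by auto
      then have "(s x a + s y a, yx + yy) \<in> G" by (rule Gadd)
      then show "x + y \<in> {r. \<exists>y. (s r a, y) \<in> G}"
        using ms by (auto simp: module.scale_left_distrib)
    next
      fix c x assume "x \<in> {r. \<exists>y. (s r a, y) \<in> G}"
      then obtain yx where "(s x a, yx) \<in> G" by auto
      then have "(s c (s x a), sI c yx) \<in> G" by (rule Gsc)
      then show "c * x \<in> {r. \<exists>y. (s r a, y) \<in> G}"
        using ms by (auto simp: module.scale_scale[OF ms, symmetric])
    qed
    have hadd: "\<forall>x\<in>J. \<forall>y\<in>J. h (x + y) = h x + h y"
    proof (intro ballI)
      fix x y assume "x\<in>J" "y\<in>J"
      then have "(s x a + s y a, h x + h y) \<in> G" by (intro Gadd hG)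
      then show "h (x + y) = h x + h y" using ms by (intro hu) (simp add: module.scale_left_distrib)
    qed
    have hsc: "\<forall>c. \<forall>x\<in>J. h (c * x) = sI c (h x)"
    proof (intro allI ballI)
      fix c x assume "x\<in>J"
      then have "(s c (s x a), sI c (h x)) \<in> G" by (intro Gsc hG)
      then show "h (c * x) = sI c (h x)" using ms by (intro hu) (simp add: module.scale_scale)
    qed
    obtain g' where g': "module_hom ((*) :: 'r \<Rightarrow> 'r \<Rightarrow> 'r) sI g'" and g'h: "\<forall>x\<in>J. g' x = h x"
      using inj Jsub hadd hsc unfolding injective_module_def by blast
    define e where "e = g' 1"
    have hJ: "h r = sI r e" if "r \<in> J" for r
    proof -
      have "g' (r * 1) = sI r (g' 1)" using g' by (rule module_hom.scale)
      then show ?thesis using g'h that by (simp add: e_def)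
    qed
    define G' where "G' = {(w + s r a, y + sI r e) | w y r. (w,y)\<in>G}"
    have memG': "(b,z) \<in> G'" if "(w,y)\<in>G" "b = w + s r a" "z = y + sI r e" for b z w y r
      using that unfolding G'_def by blast
    have memG'E: "\<exists>w y r. (w,y)\<in>G \<and> b = w + s r a \<and> z = y + sI r e" if "(b,z) \<in> G'" for b z
      using that unfolding G'_def by blast
    have "good_graph s sI V f G'"
      unfolding good_graph_def
    proof (intro conjI allI impI ballI)
      fix b z z' assume bz: "(b,z) \<in> G'" and bz': "(b,z') \<in> G'"
      obtain w y r where W1: "(w,y)\<in>G" "b = w + s r a" "z = y + sI r e" using memG'E[OF bz] by blast
      obtain w' y' r' where W2: "(w',y')\<in>G" "b = w' + s r' a" "z' = y' + sI r' e" using memG'E[OF bz'] by blast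
      note W = W1(1) W2(1) W1(2,3) W2(2,3)
      have "s (r - r') a = w' - w" using W ms by (simp add: module.scale_left_diff_distrib algebra_simps)
      then have "(s (r - r') a, y' - y) \<in> G" using Gdiff[OF W(2) W(1)] by simp
      then have "r - r' \<in> J" and "h (r - r') = y' - y" using hu[of "r - r'" "y' - y"] unfolding J_def by auto
      then have "y' - y = sI r e - sI r' e" using hJ mI by (simp add: module.scale_left_diff_distrib)
      then show "z = z'" using W by (simp add: algebra_simps)
    next
      fix b1 b2 z1 z2 assume bz1: "(b1,z1) \<in> G'" and bz2: "(b2,z2) \<in> G'"
      obtain w1 y1 r1 where W1: "(w1,y1)\<in>G" "b1 = w1 + s r1 a" "z1 = y1 + sI r1 e" using memG'E[OF bz1] by blast
      obtain w2 y2 r2 where W2: "(w2,y2)\<in>G" "b2 = w2 + s r2 a" "z2 = y2 + sI r2 e" using memG'E[OF bz2] by blast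
      note W = W1(1) W2(1) W1(2,3) W2(2,3)
      have "(w1 + w2, y1 + y2) \<in> G" by (rule Gadd[OF W(1) W(2)])
      moreover have "b1 + b2 = (w1 + w2) + s (r1 + r2) a" "z1 + z2 = (y1 + y2) + sI (r1 + r2) e"
        using W ms mI by (simp_all add: module.scale_left_distrib algebra_simps)
      ultimately show "(b1 + b2, z1 + z2) \<in> G'" by (rule memG')
    next
      fix c b z assume "(b,z) \<in> G'"
      then obtain w y r where W: "(w,y)\<in>G" "b = w + s r a" "z = y + sI r e" using memG'E by metis
      have "(s c w, sI c y) \<in> G" by (rule Gsc[OF W(1)])
      moreover have "s c b = s c w + s (c * r) a" "sI c z = sI c y + sI (c * r) e"
        using W ms mI by (simp_all add: module.scale_right_distrib module.scale_scale)
      ultimately show "(s c b, sI c z) \<in> G'" by (rule memG')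
    next
      fix b assume "b \<in> V"
      then have "(b, f b) \<in> G" by (rule GV)
      moreover have "b = b + s 0 a" "f b = f b + sI 0 e" using ms mI by (simp_all add: module.scale_zero_left)
      ultimately show "(b, f b) \<in> G'" by (rule memG')
    qed
    moreover have "G \<subseteq> G'"
    proof
      fix p assume pG: "p \<in> G"
      obtain w y where p: "p = (w, y)" by fastforce
      have "w = w + s 0 a" "y = y + sI 0 e" using ms mI by (simp_all add: module.scale_zero_left)
      from memG'[OF pG[unfolded p] this] show "p \<in> G'" by (simp add: p)
    qed
    moreover have "(a, e) \<in> G'"
    proof -
      have "a = 0 + s 1 a" "e = 0 + sI 1 e" using ms mI by (simp_all add: module.scale_one)
      then show ?thesis by (intro memG'[OF G0])
    qed
    ultimately have "G' = G" by (intro max)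
    then show False using \<open>(a, e) \<in> G'\<close> a by blast
  qed
  define g where "g x = (THE y. (x, y) \<in> G)" for x
  have gG: "(x, g x) \<in> G" for x
  proof -
    obtain y where y: "(x, y) \<in> G" using total by blast
    have "\<exists>!y. (x, y) \<in> G" using y by (intro ex1I[of _ y]) (assumption, rule Gfun[OF _ y])
    then show ?thesis unfolding g_def by (rule theI')
  qed
  have gu: "g x = y" if "(x,y)\<in>G" for x y by (rule Gfun[OF gG that])
  have "module_hom s sI g"
    unfolding module_hom_iff using ms mI
  proof (intro conjI allI)
    fix x y show "g (x + y) = g x + g y" using Gadd[OF gG gG] by (rule gu)
  next
    fix c x show "g (s c x) = sI c (g x)" using Gsc[OF gG] by (rule gu)
  qed auto
  moreover have "\<forall>a\<in>V. g a = f a"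
  proof
    fix a assume "a \<in> V" then show "g a = f a" by (rule gu[OF GV])
  qed
  ultimately show ?thesis by blast
qed



lemma hom_scale_apply[simp]: "Hom_scale s r f x = s r (f x)"
  by (simp add: Hom_scale_def)

lemma module_Hom_scale:
  assumes m: "module sI" shows "module (Hom_scale sI)"
  by unfold_locales (auto simp: fun_eq_iff module.scale_right_distrib[OF m]
      module.scale_left_distrib[OF m] module.scale_scale[OF m] module.scale_one[OF m])

lemma finite_idx: "finite (idx_sets r p)"
  unfolding idx_sets_def by (rule finite_subset[of _ "Pow {0..<r}"]) auto

lemma idx_memD: "J \<in> idx_sets r p \<Longrightarrow> finite J \<and> J \<subseteq> {0..<r} \<and> card J = p"
  unfolding idx_sets_def using finite_subset by auto

lemma pos_Diff: "pos j (J - {j}) = pos j J"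
  unfolding pos_def by (rule arg_cong[where f=card]) auto

lemma pos_insert: "pos j (insert j J) = pos j J"
  unfolding pos_def by (rule arg_cong[where f=card]) auto

lemma xprod_remove: "finite J \<Longrightarrow> j \<in> J \<Longrightarrow> xprod xs J = xs ! j * xprod xs (J - {j})"
  by (simp add: xprod_def prod.remove)

lemma powers_nth: "j < length xs \<Longrightarrow> powers xs m ! j = (xs ! j) ^ m"
  by (simp add: powers_def)

lemma length_powers[simp]: "length (powers xs m) = length xs"
  by (simp add: powers_def)

lemma reindex_idx:
  fixes G :: "nat set \<Rightarrow> nat \<Rightarrow> 'x::comm_monoid_add"
  shows "(\<Sum>J\<in>idx_sets r p. \<Sum>j\<in>{0..<r}-J. G (insert j J) j) = (\<Sum>J'\<in>idx_sets r (Suc p). \<Sum>j\<in>J'. G J' j)"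
proof -
  have "(\<Sum>J\<in>idx_sets r p. \<Sum>j\<in>{0..<r}-J. G (insert j J) j)
      = (\<Sum>(J,j)\<in>Sigma (idx_sets r p) (\<lambda>J. {0..<r}-J). G (insert j J) j)"
    by (rule sum.Sigma) (auto simp: finite_idx)
  also have "\<dots> = (\<Sum>(J',j)\<in>Sigma (idx_sets r (Suc p)) (\<lambda>J'. J'). G J' j)"
  proof (rule sum.reindex_bij_witness[of _ "\<lambda>(J',j). (J'-{j}, j)" "\<lambda>(J,j). (insert j J, j)"])
    fix a assume "a \<in> Sigma (idx_sets r p) (\<lambda>J. {0..<r}-J)"
    then obtain J j where a: "a = (J,j)" "J \<in> idx_sets r p" "j \<in> {0..<r}" "j \<notin> J" by auto
    then have fJ: "finite J" "J \<subseteq> {0..<r}" "card J = p" using idx_memD by auto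
    show "(case (case a of (J, j) \<Rightarrow> (insert j J, j)) of (J', j) \<Rightarrow> (J' - {j}, j)) = a"
      using a by auto
    show "(case a of (J, j) \<Rightarrow> (insert j J, j)) \<in> Sigma (idx_sets r (Suc p)) (\<lambda>J'. J')"
      using a fJ by (auto simp: idx_sets_def)
    show "(case (case a of (J, j) \<Rightarrow> (insert j J, j)) of (J', j) \<Rightarrow> G J' j) =
          (case a of (J, j) \<Rightarrow> G (insert j J) j)" using a by auto
  next
    fix b assume "b \<in> Sigma (idx_sets r (Suc p)) (\<lambda>J'. J')"
    then obtain J' j where b: "b = (J',j)" "J' \<in> idx_sets r (Suc p)" "j \<in> J'" by auto
    then have fJ: "finite J'" "J' \<subseteq> {0..<r}" "card J' = Suc p" using idx_memD by auto
    show "(case (case b of (J', j) \<Rightarrow> (J' - {j}, j)) of (J, j) \<Rightarrow> (insert j J, j)) = b"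
      using b by auto
    show "(case b of (J', j) \<Rightarrow> (J' - {j}, j)) \<in> Sigma (idx_sets r p) (\<lambda>J. {0..<r} - J)"
      using b fJ by (auto simp: idx_sets_def)
  qed
  also have "\<dots> = (\<Sum>J'\<in>idx_sets r (Suc p). \<Sum>j\<in>J'. G J' j)"
    by (rule sum.Sigma[symmetric]) (auto simp: finite_idx dest: idx_memD)
  finally show ?thesis .
qed

lemma num_rescale:
  assumes m: "module s" and fJ: "finite J'"
  shows "cech_num s xs (k + t) (\<lambda>J. s (xprod xs J ^ t) (c J)) J' = s (xprod xs J' ^ t) (cech_num s xs k c J')"
proof -
  have "cech_num s xs (k + t) (\<lambda>J. s (xprod xs J ^ t) (c J)) J'
     = (\<Sum>j\<in>J'. s (xprod xs J' ^ t) (s ((-1) ^ pos j J' * (xs ! j) ^ k) (c (J' - {j}))))"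
    unfolding cech_num_def
  proof (rule sum.cong[OF refl])
    fix j assume j: "j \<in> J'"
    have "(-1) ^ pos j J' * xs ! j ^ (k + t) * xprod xs (J' - {j}) ^ t
        = xprod xs J' ^ t * ((-1) ^ pos j J' * xs ! j ^ k)"
      using xprod_remove[OF fJ j, of xs] by (simp add: power_add power_mult_distrib algebra_simps)
    then show "s ((-1) ^ pos j J' * xs ! j ^ (k + t)) (s (xprod xs (J' - {j}) ^ t) (c (J' - {j})))
      = s (xprod xs J' ^ t) (s ((-1) ^ pos j J' * xs ! j ^ k) (c (J' - {j})))"
      by (simp add: module.scale_scale[OF m])
  qed
  also have "\<dots> = s (xprod xs J' ^ t) (cech_num s xs k c J')"
    unfolding cech_num_def by (simp add: module.scale_sum_right[OF m])
  finally show ?thesis .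
qed

lemma phi_boundary:
  assumes mM: "module sM" and mI: "module sI"
    and d: "\<forall>J\<in>idx_sets (length xs) p. d J \<in> Hom_carrier sM sI"
  shows "(\<Sum>J\<in>idx_sets (length xs) p. d J (koszul_d sM (powers xs K) e J))
       = (\<Sum>J'\<in>idx_sets (length xs) (Suc p). cech_num (Hom_scale sI) xs K d J' (e J'))"
proof -
  let ?r = "length xs"
  define G where "G J' j = sI ((-1) ^ pos j J' * (xs ! j) ^ K) (d (J' - {j}) (e J'))" for J' j
  have "(\<Sum>J\<in>idx_sets ?r p. d J (koszul_d sM (powers xs K) e J))
      = (\<Sum>J\<in>idx_sets ?r p. \<Sum>j\<in>{0..<?r}-J. G (insert j J) j)"
  proof (rule sum.cong[OF refl])
    fix J assume J: "J \<in> idx_sets ?r p"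
    interpret h: module_hom sM sI "d J" using d J unfolding Hom_carrier_def by auto
    show "d J (koszul_d sM (powers xs K) e J) = (\<Sum>j\<in>{0..<?r}-J. G (insert j J) j)"
      unfolding koszul_d_def h.sum h.scale G_def
      by (rule sum.cong) (auto simp: pos_insert powers_nth)
  qed
  also have "\<dots> = (\<Sum>J'\<in>idx_sets ?r (Suc p). \<Sum>j\<in>J'. G J' j)"
    by (rule reindex_idx)
  also have "\<dots> = (\<Sum>J'\<in>idx_sets ?r (Suc p). cech_num (Hom_scale sI) xs K d J' (e J'))"
    unfolding cech_num_def G_def by (simp add: sum_fun_apply)
  finally show ?thesis .
qed

lemma dprime_single:
  assumes mM: "module sM" and J0: "J0 \<in> idx_sets (length xs) p"
  shows "(\<lambda>J. if J \<in> idx_sets (length xs) (p - 1) then koszul_d sM (powers xs m) (\<lambda>J. if J = J0 then v else 0) J else 0)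
     = (\<Sum>j\<in>J0. (\<lambda>J. if J = J0 - {j} then sM ((-1) ^ pos j J0 * (xs ! j) ^ m) v else 0))"
proof (rule ext)
  fix J
  let ?r = "length xs"
  have fJ0: "finite J0" "J0 \<subseteq> {0..<?r}" "card J0 = p" using idx_memD[OF J0] by auto
  have rhs: "(\<Sum>j\<in>J0. (\<lambda>J. if J = J0 - {j} then sM ((-1) ^ pos j J0 * (xs ! j) ^ m) v else 0)) J
      = (\<Sum>j\<in>{j\<in>J0. J = J0 - {j}}. sM ((-1) ^ pos j J0 * (xs ! j) ^ m) v)"
    unfolding sum_fun_apply by (simp add: sum.inter_filter[OF fJ0(1)])
  show "(if J \<in> idx_sets ?r (p - 1) then koszul_d sM (powers xs m) (\<lambda>J. if J = J0 then v else 0) J else 0)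
     = (\<Sum>j\<in>J0. (\<lambda>J. if J = J0 - {j} then sM ((-1) ^ pos j J0 * (xs ! j) ^ m) v else 0)) J"
  proof (cases "J \<in> idx_sets ?r (p - 1)")
    case True
    have "koszul_d sM (powers xs m) (\<lambda>J. if J = J0 then v else 0) J
        = (\<Sum>j\<in>{0..<?r}-J. if insert j J = J0 then sM ((-1) ^ pos j J * powers xs m ! j) v else 0)"
      unfolding koszul_d_def by (rule sum.cong) (auto simp: module.scale_zero_right[OF mM])
    also have "\<dots> = (\<Sum>j\<in>{j\<in>{0..<?r}-J. insert j J = J0}. sM ((-1) ^ pos j J * powers xs m ! j) v)"
      by (rule sum.inter_filter[symmetric]) simp
    also have "\<dots> = (\<Sum>j\<in>{j\<in>J0. J = J0 - {j}}. sM ((-1) ^ pos j J0 * (xs ! j) ^ m) v)"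
    proof (rule sum.cong)
      show "{j\<in>{0..<?r}-J. insert j J = J0} = {j\<in>J0. J = J0 - {j}}"
        using fJ0 by auto
    next
      fix j assume "j \<in> {j\<in>J0. J = J0 - {j}}"
      then have j: "j \<in> J0" "J = J0 - {j}" by auto
      then have "j < ?r" using fJ0 by auto
      then show "sM ((-1) ^ pos j J * powers xs m ! j) v = sM ((-1) ^ pos j J0 * (xs ! j) ^ m) v"
        using j by (simp add: pos_Diff powers_nth)
    qed
    finally show ?thesis using True rhs by simp
  next
    case False
    have "{j\<in>J0. J = J0 - {j}} = {}"
    proof (rule ccontr)
      assume "{j\<in>J0. J = J0 - {j}} \<noteq> {}"
      then obtain j where j: "j \<in> J0" "J = J0 - {j}" by auto
      then have "J \<in> idx_sets ?r (p - 1)" using fJ0 by (auto simp: idx_sets_def)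
      with False show False by simp
    qed
    then show ?thesis using False rhs by (simp only: sum.empty) simp
  qed
qed



lemma hom_carrier_scale:
  assumes mM: "module sM" and mI: "module sI" and f: "f \<in> Hom_carrier sM sI"
  shows "Hom_scale sI a f \<in> Hom_carrier sM sI"
proof -
  have mp: "module_pair sM sI" using mM mI by (simp add: module_pair_def)
  show ?thesis using module_pair.module_hom_scale[OF mp, of f a] f
    unfolding Hom_carrier_def Hom_scale_def by simp
qed

lemma higher_vanish:
  fixes sM :: "'r::comm_ring_1 \<Rightarrow> 'm::ab_group_add \<Rightarrow> 'm" and sI :: "'r \<Rightarrow> 'i::ab_group_add \<Rightarrow> 'i"
  assumes mM: "module sM" and wpr: "weakly_pro_regular sM xs" and mI: "module sI"
    and inj: "injective_module sI"
    and p: "p \<ge> 1" and coc: "cech_cocycle (Hom_scale sI) (Hom_carrier sM sI) xs p k c"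
  shows "cech_coboundary (Hom_scale sI) (Hom_carrier sM sI) xs p k c"
proof -
  let ?r = "length xs"
  let ?S = "idx_sets ?r"
  let ?s = "Hom_scale sI"
  let ?N = "Hom_carrier sM sI"
  have ms: "module ?s" by (rule module_Hom_scale[OF mI])
  have msM: "module (Hom_scale sM)" by (rule module_Hom_scale[OF mM])
  from coc have cN: "\<forall>J\<in>?S p. c J \<in> ?N"
    and cl: "\<forall>J'\<in>?S (Suc p). \<exists>l. ?s (xprod xs J' ^ l) (cech_num ?s xs k c J') = 0"
    unfolding cech_cocycle_def by auto
  obtain lf where lf: "\<forall>J'\<in>?S (Suc p). ?s (xprod xs J' ^ lf J') (cech_num ?s xs k c J') = 0"
    using bchoice[OF cl] by blast
  define L where "L = (\<Sum>J'\<in>?S (Suc p). lf J')"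
  define t where "t = Suc L"
  define K where "K = k + t"
  define d where "d J = ?s (xprod xs J ^ t) (c J)" for J
  have dN: "\<forall>J\<in>?S p. d J \<in> ?N"
    using cN hom_carrier_scale[OF mM mI] unfolding d_def by blast
  have dcoc: "cech_num ?s xs K d J' = 0" if J': "J' \<in> ?S (Suc p)" for J'
  proof -
    have fJ': "finite J'" using idx_memD[OF J'] by auto
    have "lf J' \<le> L" unfolding L_def using J' by (intro member_le_sum) (auto simp: finite_idx)
    then have tt: "t = (t - lf J') + lf J'" unfolding t_def by simp
    have "cech_num ?s xs K d J' = ?s (xprod xs J' ^ t) (cech_num ?s xs k c J')"
      unfolding K_def d_def by (rule num_rescale[OF ms fJ'])
    also have "\<dots> = ?s (xprod xs J' ^ (t - lf J')) (?s (xprod xs J' ^ lf J') (cech_num ?s xs k c J'))"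
      by (subst tt) (simp only: power_add module.scale_scale[OF ms])
    also have "\<dots> = 0" using lf J' module.scale_zero_right[OF ms] by simp
    finally show ?thesis .
  qed
  have "K \<ge> 1" unfolding K_def t_def by simp
  then obtain m where mK: "m \<ge> K" and mcyc: "\<forall>z. koszul_cycle sM (powers xs m) p z \<longrightarrow>
      koszul_boundary sM (powers xs K) p (koszul_trans sM xs m K z)"
    using wpr p unfolding weakly_pro_regular_def by (meson less_le_trans zero_less_one)
  define \<phi> where "\<phi> e = (\<Sum>J\<in>?S p. d J (e J))" for e :: "nat set \<Rightarrow> 'm"
  have \<phi>_bd: "\<phi> (koszul_d sM (powers xs K) b) = 0" for b
  proof -
    have "\<phi> (koszul_d sM (powers xs K) b) = (\<Sum>J'\<in>?S (Suc p). cech_num ?s xs K d J' (b J'))"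
      unfolding \<phi>_def by (rule phi_boundary[OF mM mI dN])
    also have "\<dots> = 0" using dcoc by simp
    finally show ?thesis .
  qed
  define \<psi> where "\<psi> z = \<phi> (koszul_trans sM xs m K z)" for z
  have \<psi>_hom: "module_hom (Hom_scale sM) sI \<psi>"
    unfolding module_hom_iff
  proof (intro conjI allI msM mI)
    fix x y :: "nat set \<Rightarrow> 'm"
    show "\<psi> (x + y) = \<psi> x + \<psi> y"
      unfolding \<psi>_def \<phi>_def koszul_trans_def sum.distrib[symmetric]
    proof (rule sum.cong[OF refl])
      fix J assume J: "J \<in> ?S p"
      interpret h: module_hom sM sI "d J" using dN J unfolding Hom_carrier_def by auto
      show "d J (sM (xprod xs J ^ (m - K)) ((x + y) J)) =
          d J (sM (xprod xs J ^ (m - K)) (x J)) + d J (sM (xprod xs J ^ (m - K)) (y J))"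
        by (simp add: module.scale_right_distrib[OF mM] h.add)
    qed
  next
    fix a and x :: "nat set \<Rightarrow> 'm"
    show "\<psi> (Hom_scale sM a x) = sI a (\<psi> x)"
      unfolding \<psi>_def \<phi>_def koszul_trans_def module.scale_sum_right[OF mI]
    proof (rule sum.cong[OF refl])
      fix J assume J: "J \<in> ?S p"
      interpret h: module_hom sM sI "d J" using dN J unfolding Hom_carrier_def by auto
      show "d J (sM (xprod xs J ^ (m - K)) (Hom_scale sM a x J)) =
          sI a (d J (sM (xprod xs J ^ (m - K)) (x J)))"
        by (simp add: module.scale_left_commute[OF mM, of _ a] h.scale mult.commute)
    qed
  qed
  have \<psi>_cyc: "\<psi> z = 0" if zc: "koszul_cycle sM (powers xs m) p z" for z
  proof -
    obtain b where b: "\<forall>J\<in>?S p. koszul_d sM (powers xs K) b J = koszul_trans sM xs m K z J"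
      using mcyc zc unfolding koszul_boundary_def by auto
    have "\<psi> z = \<phi> (koszul_d sM (powers xs K) b)"
      unfolding \<psi>_def \<phi>_def using b by (intro sum.cong) auto
    then show ?thesis using \<phi>_bd by simp
  qed
  define D where "D e = (\<lambda>J. if J \<in> ?S (p - 1) then koszul_d sM (powers xs m) e J else 0)"
    for e :: "nat set \<Rightarrow> 'm"
  have kd_add: "koszul_d sM ys (x + y) J = koszul_d sM ys x J + koszul_d sM ys y J"
    for ys and x y :: "nat set \<Rightarrow> 'm" and J
    unfolding koszul_d_def by (simp add: module.scale_right_distrib[OF mM] sum.distrib)
  have kd_scale: "koszul_d sM ys (Hom_scale sM a x) J = sM a (koszul_d sM ys x J)"
    for ys and x :: "nat set \<Rightarrow> 'm" and J a
    unfolding koszul_d_def module.scale_sum_right[OF mM]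
    by (simp add: module.scale_left_commute[OF mM, of _ a])
  have D_hom: "module_hom (Hom_scale sM) (Hom_scale sM) D"
    unfolding module_hom_iff
  proof (intro conjI allI msM)
    fix x y :: "nat set \<Rightarrow> 'm"
    show "D (x + y) = D x + D y" unfolding D_def by (rule ext) (simp add: kd_add)
  next
    fix a and x :: "nat set \<Rightarrow> 'm"
    show "D (Hom_scale sM a x) = Hom_scale sM a (D x)"
      unfolding D_def by (rule ext) (simp add: kd_scale module.scale_zero_right[OF mM])
  qed
  interpret Dh: module_hom "Hom_scale sM" "Hom_scale sM" D by (rule D_hom)
  interpret \<psi>h: module_hom "Hom_scale sM" sI \<psi> by (rule \<psi>_hom)
  have D_cyc: "koszul_cycle sM (powers xs m) p e" if De: "D e = 0" for e
    unfolding koszul_cycle_def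
  proof
    fix J assume J: "J \<in> idx_sets (length (powers xs m)) (p - 1)"
    have "D e J = 0" using De by simp
    then show "koszul_d sM (powers xs m) e J = 0" using J unfolding D_def by simp
  qed
  define V where "V = range D"
  have V: "module.subspace (Hom_scale sM) V"
    unfolding V_def by (rule Dh.subspace_image) (rule module.subspace_UNIV[OF msM])
  define f where "f v = \<psi> (SOME e. D e = v)" for v
  have fD: "f (D e) = \<psi> e" for e
  proof -
    define e' where "e' = (SOME e'. D e' = D e)"
    have "D e' = D e" unfolding e'_def by (rule someI[of _ e]) simp
    then have "D (e' - e) = 0" by (simp add: Dh.diff)
    then have "\<psi> (e' - e) = 0" by (intro \<psi>_cyc D_cyc)
    then have "\<psi> e' = \<psi> e" by (simp add: \<psi>h.diff)
    then show ?thesis unfolding f_def e'_def .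
  qed
  have fadd: "\<forall>a\<in>V. \<forall>b\<in>V. f (a + b) = f a + f b"
  proof (intro ballI)
    fix a b assume "a \<in> V" "b \<in> V"
    then obtain e1 e2 where "a = D e1" "b = D e2" unfolding V_def by auto
    then have "a + b = D (e1 + e2)" by (simp add: Dh.add)
    then show "f (a + b) = f a + f b" using \<open>a = D e1\<close> \<open>b = D e2\<close> by (simp add: fD \<psi>h.add)
  qed
  have fsc: "\<forall>c. \<forall>a\<in>V. f (Hom_scale sM c a) = sI c (f a)"
  proof (intro allI ballI)
    fix c a assume "a \<in> V"
    then obtain e1 where a: "a = D e1" unfolding V_def by auto
    then have "Hom_scale sM c a = D (Hom_scale sM c e1)" by (simp add: Dh.scale)
    then show "f (Hom_scale sM c a) = sI c (f a)" using a by (simp add: fD \<psi>h.scale)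
  qed
  obtain \<chi> where \<chi>: "module_hom (Hom_scale sM) sI \<chi>" and \<chi>V: "\<forall>a\<in>V. \<chi> a = f a"
    using baer_extend[OF msM mI inj V fadd fsc] by blast
  interpret \<chi>h: module_hom "Hom_scale sM" sI \<chi> by (rule \<chi>)
  have \<chi>D: "\<chi> (D e) = \<psi> e" for e using \<chi>V fD unfolding V_def by auto
  define b where "b J = (\<lambda>v. \<chi> (\<lambda>J'. if J' = J then v else 0))" for J
  have bN: "b J \<in> ?N" for J
    unfolding Hom_carrier_def module_hom_iff
  proof (intro CollectI conjI allI mM mI)
    fix v w :: 'm
    have "(\<lambda>J'. if J' = J then v + w else 0) = (\<lambda>J'. if J' = J then v else 0) + (\<lambda>J'. if J' = J then w else 0)"
      by (rule ext) simp
    then show "b J (v + w) = b J v + b J w" unfolding b_def by (simp add: \<chi>h.add)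
  next
    fix a and v :: 'm
    have "(\<lambda>J'. if J' = J then sM a v else 0) = Hom_scale sM a (\<lambda>J'. if J' = J then v else 0)"
      by (rule ext) (simp add: module.scale_zero_right[OF mM])
    then show "b J (sM a v) = sI a (b J v)" unfolding b_def by (simp add: \<chi>h.scale)
  qed
  have key: "cech_num ?s xs m b J0 = ?s (xprod xs J0 ^ (m - K)) (d J0)" if J0: "J0 \<in> ?S p" for J0
  proof (rule ext)
    fix v :: 'm
    define e where "e = (\<lambda>J. if J = J0 then v else 0)"
    interpret h0: module_hom sM sI "d J0" using dN J0 unfolding Hom_carrier_def by auto
    have "\<psi> e = (\<Sum>J\<in>?S p. if J = J0 then d J0 (sM (xprod xs J0 ^ (m - K)) v) else 0)"
      unfolding \<psi>_def \<phi>_def koszul_trans_def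
    proof (rule sum.cong[OF refl])
      fix J assume J: "J \<in> ?S p"
      interpret h: module_hom sM sI "d J" using dN J unfolding Hom_carrier_def by auto
      show "d J (sM (xprod xs J ^ (m - K)) (e J)) = (if J = J0 then d J0 (sM (xprod xs J0 ^ (m - K)) v) else 0)"
        unfolding e_def by (simp add: module.scale_zero_right[OF mM])
    qed
    also have "\<dots> = sI (xprod xs J0 ^ (m - K)) (d J0 v)"
      using J0 by (simp add: finite_idx h0.scale)
    finally have \<psi>e: "\<psi> e = sI (xprod xs J0 ^ (m - K)) (d J0 v)" .
    have "D e = (\<Sum>j\<in>J0. (\<lambda>J. if J = J0 - {j} then sM ((-1) ^ pos j J0 * (xs ! j) ^ m) v else 0))"
      unfolding D_def e_def by (rule dprime_single[OF mM J0])
    then have "\<chi> (D e) = (\<Sum>j\<in>J0. b (J0 - {j}) (sM ((-1) ^ pos j J0 * (xs ! j) ^ m) v))"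
      unfolding b_def by (simp add: \<chi>h.sum)
    also have "\<dots> = cech_num ?s xs m b J0 v"
      unfolding cech_num_def sum_fun_apply
    proof (rule sum.cong[OF refl])
      fix j
      interpret hb: module_hom sM sI "b (J0 - {j})" using bN unfolding Hom_carrier_def by auto
      show "b (J0 - {j}) (sM ((-1) ^ pos j J0 * xs ! j ^ m) v) =
          Hom_scale sI ((-1) ^ pos j J0 * xs ! j ^ m) (b (J0 - {j})) v"
        by (simp add: hb.scale)
    qed
    finally show "cech_num ?s xs m b J0 v = ?s (xprod xs J0 ^ (m - K)) (d J0) v"
      using \<chi>D \<psi>e by simp
  qed
  show ?thesis
    unfolding cech_coboundary_def
  proof (rule exI[of _ m], rule exI[of _ b], intro conjI ballI)
    fix J assume "J \<in> ?S (p - 1)" show "b J \<in> ?N" by (rule bN)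
  next
    fix J assume J: "J \<in> ?S p"
    have e: "k + (m - K + t) = m" using mK unfolding K_def by simp
    have "?s (xprod xs J ^ k) (cech_num ?s xs m b J) = ?s (xprod xs J ^ m) (c J)"
      unfolding key[OF J] d_def
      by (simp add: module.scale_scale[OF ms] power_add[symmetric] e)
    then show "\<exists>l. ?s (xprod xs J ^ l)
        (?s (xprod xs J ^ k) (cech_num ?s xs m b J) - ?s (xprod xs J ^ m) (c J)) = 0"
      by (intro exI[of _ 0]) (simp add: module.scale_one[OF ms])
  qed
qed


theorem corollary5p4:
  fixes sM :: "'r::comm_ring_1 \<Rightarrow> 'm::ab_group_add \<Rightarrow> 'm"
    and sI :: "'r \<Rightarrow> 'i::ab_group_add \<Rightarrow> 'i"
    and xs :: "'r list"
  assumes "module sM"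
    and "weakly_pro_regular sM xs"
    and "module sI"
    and "injective_module sI"
  shows "natural_map_quasi_iso (Hom_scale sI) (Hom_carrier sM sI) xs"
  unfolding natural_map_quasi_iso_def
  using gamma_eq[OF module_Hom_scale[OF assms(3)]] higher_vanish[OF assms(1,2,3,4)] by blast

end
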